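(* In the setting described in the context (the random experiment for SA2), for every service $i\in S$ and every node $j\in V$, $\Pr(j\in X^\tau_i)\ge\delta\,(1-\exp(-x_{ij}))$.
   Context: An SPSC instance: finite sets $S$ (services), $V$ (nodes), $U$ (users); sizes $s_i>0$; capacities $c_j>0$; for each user $k$ a service $i_k\in S$, a set $T_k\subseteq V$, a reward $w_k>0$. Let $\{x_{ij}\},\{y_k\}$ be an optimal solution of the LP with nonnegative variables: maximize $\sum_ky_kw_k$ s.t. $y_k\le\sum_{j\in T_k}x_{i_kj}$, $y_k\le1$; $\sum_ix_{ij}s_i\le c_j$; $x_{ij}=0$ if $s_i>c_j$; $0\le x_{ij}\le1$. Let $\beta:=1/4,\gamma:=1/2,\delta:=1/4$, $\mathbb N=\{1,2,\dots\}$. For $j\in V$: $P_j^\oplus:=\{i:c_j/2<s_i\le c_j\}$, $P_j^\ominus:=\{i:c_j/4<s_i\le c_j/2\}$, $P_j^q:=\{i:\gamma^qc_j\beta<s_i\le\gamma^{q-1}c_j\beta\}$ ($q\in\mathbb N$); $d_j^q:=\sum_{i\in P_j^q}x_{ij}$ for $q\in\mathbb N\cup\{\oplus,\ominus\}$; $v_j:=\delta c_j/\sum_{i:s_i\le c_j\beta}s_ix_{ij}$; $n_j^q:=\lceil v_jd_j^q\rceil$; $h_j:=d_j^\ominus$ if $d_j^\ominus<2$, else $d_j^\ominus/2$. A construction map $\zeta:V\to\{1,2,3\}$ has slot set $\Lambda(\zeta)$ (slot $\sigma$ has node $\nu(\sigma)$, class $\kappa(\sigma)$): for each $j$, one slot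 of class $\oplus$ if $\zeta(j)=1$; two slots of class $\ominus$ if $\zeta(j)=2$; for each $q\in\mathbb N$, $n_j^q$ slots of class $q$ if $\zeta(j)=3$; no other slots on $j$. A slot allocation of $\Lambda$ is $\tau:\Lambda\to S$ with $\tau(\sigma)\in P^{\kappa(\sigma)}_{\nu(\sigma)}$; $X^\tau_i:=\{j:\exists\sigma\in\Lambda,\nu(\sigma)=j,\tau(\sigma)=i\}$. Random experiment: $\zeta(j)$ independent over $j$, equal to $1,2,3$ with probabilities $\delta d_j^\oplus,\ \delta h_j,\ 1-\delta d_j^\oplus-\delta h_j$; given $\zeta$, each slot $\sigma\in\Lambda(\zeta)$ independently gets $\tau(\sigma)=i$ with probability $x_{i\nu(\sigma)}/d^{\kappa(\sigma)}_{\nu(\sigma)}$, $i\in P^{\kappa(\sigma)}_{\nu(\sigma)}$. *)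

theory Defs
  imports "HOL-Probability.Probability"
begin

definition beta_c :: real where "beta_c = 1/4"
definition gamma_c :: real where "gamma_c = 1/2"
definition delta_c :: real where "delta_c = 1/4"

text \<open>Classes of slots: oplus, ominus, and q for q in N (q >= 1).\<close>
datatype cls = Plus | Minus | Q nat

text \<open>Feasibility and optimality of the LP relaxation.
  S services, V nodes, U users, s sizes, c capacities,
  svc k = i_k, T k = T_k, w k = w_k.\<close>
definition lp_feasible ::
  "'s set \<Rightarrow> 'v set \<Rightarrow> 'u set \<Rightarrow> ('s \<Rightarrow> real) \<Rightarrow> ('v \<Rightarrow> real) \<Rightarrow>
   ('u \<Rightarrow> 's) \<Rightarrow> ('u \<Rightarrow> 'v set) \<Rightarrow> ('s \<Rightarrow> 'v \<Rightarrow> real) \<Rightarrow> ('u \<Rightarrow> real) \<Rightarrow> bool" where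
  "lp_feasible S V U s c svc T x y \<longleftrightarrow>
     (\<forall>k\<in>U. 0 \<le> y k \<and> y k \<le> (\<Sum>j\<in>T k. x (svc k) j) \<and> y k \<le> 1) \<and>
     (\<forall>j\<in>V. (\<Sum>i\<in>S. x i j * s i) \<le> c j) \<and>
     (\<forall>i\<in>S. \<forall>j\<in>V. 0 \<le> x i j \<and> x i j \<le> 1 \<and> (s i > c j \<longrightarrow> x i j = 0))"

definition lp_optimal ::
  "'s set \<Rightarrow> 'v set \<Rightarrow> 'u set \<Rightarrow> ('s \<Rightarrow> real) \<Rightarrow> ('v \<Rightarrow> real) \<Rightarrow>
   ('u \<Rightarrow> 's) \<Rightarrow> ('u \<Rightarrow> 'v set) \<Rightarrow> ('u \<Rightarrow> real) \<Rightarrow> ('s \<Rightarrow> 'v \<Rightarrow> real) \<Rightarrow> ('u \<Rightarrow> real) \<Rightarrow> bool" where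
  "lp_optimal S V U s c svc T w x y \<longleftrightarrow>
     lp_feasible S V U s c svc T x y \<and>
     (\<forall>x' y'. lp_feasible S V U s c svc T x' y' \<longrightarrow>
        (\<Sum>k\<in>U. y' k * w k) \<le> (\<Sum>k\<in>U. y k * w k))"

fun Pcls :: "'s set \<Rightarrow> ('s \<Rightarrow> real) \<Rightarrow> ('v \<Rightarrow> real) \<Rightarrow> 'v \<Rightarrow> cls \<Rightarrow> 's set" where
  "Pcls S s c j Plus = {i\<in>S. c j / 2 < s i \<and> s i \<le> c j}"
| "Pcls S s c j Minus = {i\<in>S. c j / 4 < s i \<and> s i \<le> c j / 2}"
| "Pcls S s c j (Q q) =
     {i\<in>S. gamma_c ^ q * c j * beta_c < s i \<and> s i \<le> gamma_c ^ (q - 1) * c j * beta_c}"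

definition dcls :: "'s set \<Rightarrow> ('s \<Rightarrow> real) \<Rightarrow> ('v \<Rightarrow> real) \<Rightarrow> ('s \<Rightarrow> 'v \<Rightarrow> real) \<Rightarrow> 'v \<Rightarrow> cls \<Rightarrow> real" where
  "dcls S s c x j k = (\<Sum>i\<in>Pcls S s c j k. x i j)"

definition vnode :: "'s set \<Rightarrow> ('s \<Rightarrow> real) \<Rightarrow> ('v \<Rightarrow> real) \<Rightarrow> ('s \<Rightarrow> 'v \<Rightarrow> real) \<Rightarrow> 'v \<Rightarrow> real" where
  "vnode S s c x j = delta_c * c j / (\<Sum>i\<in>{i\<in>S. s i \<le> c j * beta_c}. s i * x i j)"

definition nslots :: "'s set \<Rightarrow> ('s \<Rightarrow> real) \<Rightarrow> ('v \<Rightarrow> real) \<Rightarrow> ('s \<Rightarrow> 'v \<Rightarrow> real) \<Rightarrow> 'v \<Rightarrow> nat \<Rightarrow> nat" where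
  "nslots S s c x j q = nat \<lceil>vnode S s c x j * dcls S s c x j (Q q)\<rceil>"

definition hnode :: "'s set \<Rightarrow> ('s \<Rightarrow> real) \<Rightarrow> ('v \<Rightarrow> real) \<Rightarrow> ('s \<Rightarrow> 'v \<Rightarrow> real) \<Rightarrow> 'v \<Rightarrow> real" where
  "hnode S s c x j = (let d = dcls S s c x j Minus in if d < 2 then d else d / 2)"

definition slots :: "'s set \<Rightarrow> 'v set \<Rightarrow> ('s \<Rightarrow> real) \<Rightarrow> ('v \<Rightarrow> real) \<Rightarrow> ('s \<Rightarrow> 'v \<Rightarrow> real) \<Rightarrow>
    ('v \<Rightarrow> nat) \<Rightarrow> ('v \<times> cls \<times> nat) set" where
  "slots S V s c x \<zeta> =
     {(j, Plus, 0) | j. j \<in> V \<and> \<zeta> j = 1} \<union>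
     {(j, Minus, k) | j k. j \<in> V \<and> \<zeta> j = 2 \<and> k < 2} \<union>
     {(j, Q q, k) | j q k. j \<in> V \<and> \<zeta> j = 3 \<and> 1 \<le> q \<and> k < nslots S s c x j q}"

definition Xset :: "('v \<times> cls \<times> nat) set \<Rightarrow> ('v \<times> cls \<times> nat \<Rightarrow> 's) \<Rightarrow> 's \<Rightarrow> 'v set" where
  "Xset Lam \<tau> i = {j. \<exists>\<sigma>\<in>Lam. fst \<sigma> = j \<and> \<tau> \<sigma> = i}"

definition zeta_pmf :: "'s set \<Rightarrow> ('s \<Rightarrow> real) \<Rightarrow> ('v \<Rightarrow> real) \<Rightarrow> ('s \<Rightarrow> 'v \<Rightarrow> real) \<Rightarrow> 'v \<Rightarrow> nat pmf" where
  "zeta_pmf S s c x j = embed_pmf (\<lambda>t.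
      if t = 1 then delta_c * dcls S s c x j Plus
      else if t = 2 then delta_c * hnode S s c x j
      else if t = 3 then 1 - delta_c * dcls S s c x j Plus - delta_c * hnode S s c x j
      else 0)"

definition slot_pmf :: "'s set \<Rightarrow> ('s \<Rightarrow> real) \<Rightarrow> ('v \<Rightarrow> real) \<Rightarrow> ('s \<Rightarrow> 'v \<Rightarrow> real) \<Rightarrow>
    'v \<times> cls \<times> nat \<Rightarrow> 's pmf" where
  "slot_pmf S s c x \<sigma> = (case \<sigma> of (j, k, _) \<Rightarrow>
      embed_pmf (\<lambda>i. if i \<in> Pcls S s c j k then x i j / dcls S s c x j k else 0))"

definition sa2_experiment :: "'s set \<Rightarrow> 'v set \<Rightarrow> ('s \<Rightarrow> real) \<Rightarrow> ('v \<Rightarrow> real) \<Rightarrow> ('s \<Rightarrow> 'v \<Rightarrow> real) \<Rightarrow>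
    's \<Rightarrow> (('v \<Rightarrow> nat) \<times> ('v \<times> cls \<times> nat \<Rightarrow> 's)) pmf" where
  "sa2_experiment S V s c x dflt =
     do { \<zeta> \<leftarrow> Pi_pmf V 0 (zeta_pmf S s c x);
          \<tau> \<leftarrow> Pi_pmf (slots S V s c x \<zeta>) dflt (slot_pmf S s c x);
          return_pmf (\<zeta>, \<tau>) }"

end

theory Submission imports Defs begin

lemma exp_b1: "1 - exp (- (t::real)) \<le> t"
  using exp_ge_add_one_self[of "-t"] by linarith

lemma exp_b2: assumes "0 \<le> (t::real)" "t \<le> 2" shows "1 - exp (- t) \<le> t - t^2/4"
proof -
  have a: "1 - t/2 \<le> exp (- (t/2))" using exp_ge_add_one_self[of "-(t/2)"] by linarith
  have "(1 - t/2)^2 \<le> exp (- (t/2))^2" using assms a by (intro power_mono) auto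
  also have "exp (- (t/2))^2 = exp (- t)" by (simp add: power2_eq_square flip: exp_add)
  finally show ?thesis by (simp add: power2_eq_square field_simps)
qed

lemma exp_b3: assumes "0 \<le> (u::real)" "u \<le> 1" shows "u * (1 - exp (- t)) \<le> 1 - exp (- (u * t))"
proof -
  have "exp ((1 - u) *\<^sub>R 0 + u *\<^sub>R (-t)) \<le> (1 - u) * exp 0 + u * exp (-t)"
    by (rule convex_onD[OF exp_convex]) (use assms in auto)
  then show ?thesis by (simp add: algebra_simps)
qed

lemma prob_Pi_exists:
  assumes "finite A" "B \<subseteq> A"
  shows "measure_pmf.prob (Pi_pmf A dflt p) {\<tau>. \<exists>\<sigma>\<in>B. \<tau> \<sigma> = i} = 1 - (\<Prod>\<sigma>\<in>B. 1 - pmf (p \<sigma>) i)"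
proof -
  have eq: "{\<tau>. \<exists>\<sigma>\<in>B. \<tau> \<sigma> = i} = UNIV - Pi A (\<lambda>\<sigma>. if \<sigma> \<in> B then - {i} else UNIV)"
    using assms by (auto simp: Pi_def)
  have "measure_pmf.prob (Pi_pmf A dflt p) (Pi A (\<lambda>\<sigma>. if \<sigma> \<in> B then - {i} else UNIV))
      = (\<Prod>\<sigma>\<in>A. measure_pmf.prob (p \<sigma>) (if \<sigma> \<in> B then - {i} else UNIV))"
    by (rule measure_Pi_pmf_Pi) (rule assms)
  also have "\<dots> = (\<Prod>\<sigma>\<in>A. if \<sigma> \<in> B then 1 - pmf (p \<sigma>) i else 1)"
    by (intro prod.cong refl) (auto simp: Compl_eq_Diff_UNIV measure_pmf.prob_compl[where M="_", simplified] measure_pmf_single)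
  also have "\<dots> = (\<Prod>\<sigma>\<in>B. 1 - pmf (p \<sigma>) i)"
    using assms by (simp add: prod.If_cases Int_absorb1)
  finally show ?thesis unfolding eq
    using measure_pmf.prob_compl[of "Pi A (\<lambda>\<sigma>. if \<sigma> \<in> B then - {i} else UNIV)" "Pi_pmf A dflt p"]
    by simp
qed


lemma outer_bound:
  fixes Z :: "'v \<Rightarrow> nat pmf" and L :: "('v \<Rightarrow> nat) \<Rightarrow> 'a set" and q :: "'a \<Rightarrow> 'b pmf"
  assumes "finite V" "j \<in> V" "0 \<le> K"
    and K: "\<And>\<zeta>. \<zeta> j = t0 \<Longrightarrow> K \<le> measure_pmf.prob (Pi_pmf (L \<zeta>) dflt q) {\<tau>. P \<zeta> \<tau>}"
  shows "pmf (Z j) t0 * K \<le> measure_pmf.prob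
     (do {\<zeta> \<leftarrow> Pi_pmf V 0 Z; \<tau> \<leftarrow> Pi_pmf (L \<zeta>) dflt q; return_pmf (\<zeta>,\<tau>)}) {(\<zeta>,\<tau>). P \<zeta> \<tau>}"
proof -
  let ?M = "do {\<zeta> \<leftarrow> Pi_pmf V 0 Z; \<tau> \<leftarrow> Pi_pmf (L \<zeta>) dflt q; return_pmf (\<zeta>,\<tau>)}"
  let ?E = "{(\<zeta>,\<tau>). P \<zeta> \<tau>}"
  have e1: "emeasure ?M ?E = (\<integral>\<^sup>+\<zeta>. emeasure (Pi_pmf (L \<zeta>) dflt q) {\<tau>. P \<zeta> \<tau>} \<partial>Pi_pmf V 0 Z)"
    by (simp add: bind_return_pmf map_pmf_def[symmetric] vimage_def)
  have "(\<integral>\<^sup>+\<zeta>. ennreal K * indicator {\<zeta>. \<zeta> j = t0} \<zeta> \<partial>Pi_pmf V 0 Z)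
       \<le> (\<integral>\<^sup>+\<zeta>. emeasure (Pi_pmf (L \<zeta>) dflt q) {\<tau>. P \<zeta> \<tau>} \<partial>Pi_pmf V 0 Z)"
  proof (intro nn_integral_mono)
    fix \<zeta> show "ennreal K * indicator {\<zeta>. \<zeta> j = t0} \<zeta> \<le> emeasure (Pi_pmf (L \<zeta>) dflt q) {\<tau>. P \<zeta> \<tau>}"
      using K[of \<zeta>] by (auto simp: indicator_def measure_pmf.emeasure_eq_measure)
  qed
  also have "(\<integral>\<^sup>+\<zeta>. ennreal K * indicator {\<zeta>. \<zeta> j = t0} \<zeta> \<partial>Pi_pmf V 0 Z)
      = ennreal K * emeasure (Pi_pmf V 0 Z) {\<zeta>. \<zeta> j = t0}"
    by (rule nn_integral_cmult_indicator) simp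
  also have "emeasure (Pi_pmf V 0 Z) {\<zeta>. \<zeta> j = t0} = emeasure (map_pmf (\<lambda>f. f j) (Pi_pmf V 0 Z)) {t0}"
    by (simp add: vimage_def)
  also have "\<dots> = ennreal (pmf (Z j) t0)"
    using assms by (simp add: Pi_pmf_component emeasure_pmf_single)
  also note e1[symmetric]
  finally have "ennreal (K * pmf (Z j) t0) \<le> ennreal (measure_pmf.prob ?M ?E)"
    using assms(3) by (simp add: measure_pmf.emeasure_eq_measure ennreal_mult)
  then show ?thesis by (simp add: mult.commute)
qed


locale sa2 =
  fixes S :: "'s set" and V :: "'v set" and s :: "'s \<Rightarrow> real" and c :: "'v \<Rightarrow> real"
    and x :: "'s \<Rightarrow> 'v \<Rightarrow> real"
  assumes finS: "finite S" and spos: "\<forall>i\<in>S. s i > 0" and cpos: "\<forall>j\<in>V. c j > 0"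
    and cap: "\<forall>j\<in>V. (\<Sum>i\<in>S. x i j * s i) \<le> c j"
    and xb: "\<forall>i\<in>S. \<forall>j\<in>V. 0 \<le> x i j \<and> x i j \<le> 1 \<and> (s i > c j \<longrightarrow> x i j = 0)"
begin

abbreviation "d j k \<equiv> dcls S s c x j k"
abbreviation "small j \<equiv> (\<Sum>i\<in>{i\<in>S. s i \<le> c j * beta_c}. s i * x i j)"

lemma Pcls_sub: "Pcls S s c j k \<subseteq> S"
  by (cases k) auto

lemma finite_Pcls: "finite (Pcls S s c j k)"
  using Pcls_sub finS finite_subset by blast

lemma xP_nonneg: "j \<in> V \<Longrightarrow> i \<in> Pcls S s c j k \<Longrightarrow> 0 \<le> x i j"
  using Pcls_sub xb by blast

lemma d_nonneg: "j \<in> V \<Longrightarrow> 0 \<le> d j k"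
  unfolding dcls_def using xP_nonneg by (intro sum_nonneg) auto

lemma x_le_d: "j \<in> V \<Longrightarrow> i \<in> Pcls S s c j k \<Longrightarrow> x i j \<le> d j k"
  unfolding dcls_def using xP_nonneg finite_Pcls
  by (intro member_le_sum) auto

lemma sx_nonneg: "j \<in> V \<Longrightarrow> i \<in> S \<Longrightarrow> 0 \<le> s i * x i j"
  using xb spos by (simp add: less_imp_le)

lemma small_nonneg: "j \<in> V \<Longrightarrow> 0 \<le> small j"
  using sx_nonneg by (intro sum_nonneg) auto

lemma capacity: assumes j: "j \<in> V"
  shows "c j * d j Plus / 2 + c j * d j Minus / 4 + small j \<le> c j"
proof -
  let ?P = "Pcls S s c j Plus" and ?M = "Pcls S s c j Minus" and ?Sm = "{i\<in>S. s i \<le> c j * beta_c}"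
  have fin: "finite ?P" "finite ?M" "finite ?Sm" using finite_Pcls finS by auto
  have dis: "?P \<inter> ?M = {}" "(?P \<union> ?M) \<inter> ?Sm = {}" by (auto simp: beta_c_def)
  have "c j * d j Plus / 2 = (\<Sum>i\<in>?P. c j / 2 * x i j)"
    by (simp add: dcls_def sum_distrib_left sum_divide_distrib)
  also have "\<dots> \<le> (\<Sum>i\<in>?P. s i * x i j)"
    using xb j by (intro sum_mono mult_right_mono; fastforce)
  finally have 1: "c j * d j Plus / 2 \<le> (\<Sum>i\<in>?P. s i * x i j)" .
  have "c j * d j Minus / 4 = (\<Sum>i\<in>?M. c j / 4 * x i j)"
    by (simp add: dcls_def sum_distrib_left sum_divide_distrib)
  also have "\<dots> \<le> (\<Sum>i\<in>?M. s i * x i j)"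
    using xb j by (intro sum_mono mult_right_mono; fastforce)
  finally have 2: "c j * d j Minus / 4 \<le> (\<Sum>i\<in>?M. s i * x i j)" .
  have "(\<Sum>i\<in>?P. s i * x i j) + (\<Sum>i\<in>?M. s i * x i j) + small j = (\<Sum>i\<in>?P \<union> ?M \<union> ?Sm. s i * x i j)"
    using fin dis by (simp add: sum.union_disjoint)
  also have "\<dots> \<le> (\<Sum>i\<in>S. s i * x i j)"
    using finS sx_nonneg j by (intro sum_mono2) auto
  also have "\<dots> \<le> c j" using cap j by (simp add: mult.commute)
  finally show ?thesis using 1 2 by linarith
qed

lemma h_props: assumes "j \<in> V"
  shows "0 \<le> hnode S s c x j" "hnode S s c x j \<le> d j Minus"
    "d j Plus + hnode S s c x j \<le> 3"
proof -
  have c: "c j > 0" using cpos assms by auto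
  have "c j * (d j Plus / 2 + d j Minus / 4) \<le> c j"
    using capacity[OF assms] small_nonneg[OF assms] by (simp add: algebra_simps)
  then have k: "d j Plus / 2 + d j Minus / 4 \<le> 1" using c by simp
  show "0 \<le> hnode S s c x j" "hnode S s c x j \<le> d j Minus" "d j Plus + hnode S s c x j \<le> 3"
    using d_nonneg[OF assms, of Minus] d_nonneg[OF assms, of Plus] k
    by (auto simp: hnode_def Let_def)
qed

lemma pmf_zeta: assumes "j \<in> V"
  shows "pmf (zeta_pmf S s c x j) t = (if t = 1 then delta_c * d j Plus
      else if t = 2 then delta_c * hnode S s c x j
      else if t = 3 then 1 - delta_c * d j Plus - delta_c * hnode S s c x j
      else 0)"
proof -
  let ?f = "\<lambda>t::nat. if t = 1 then delta_c * d j Plus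
      else if t = 2 then delta_c * hnode S s c x j
      else if t = 3 then 1 - delta_c * d j Plus - delta_c * hnode S s c x j
      else 0"
  have nn: "\<And>t. 0 \<le> ?f t"
    using h_props[OF assms] d_nonneg[OF assms, of Plus] by (auto simp: delta_c_def)
  have "(\<integral>\<^sup>+t. ennreal (?f t) \<partial>count_space UNIV) = (\<Sum>t\<in>{1,2,3}. ennreal (?f t))"
    by (rule nn_integral_count_space') auto
  also have "\<dots> = ennreal (\<Sum>t\<in>{1,2,3}. ?f t)"
    using nn by (intro sum_ennreal) auto
  also have "(\<Sum>t\<in>{1,2,3}. ?f t) = 1" by simp
  finally show ?thesis unfolding zeta_pmf_def
    by (subst pmf_embed_pmf) (use nn in auto)
qed

lemma pmf_slot: assumes "j \<in> V" "d j k > 0"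
  shows "pmf (slot_pmf S s c x (j, k, n)) i = (if i \<in> Pcls S s c j k then x i j / d j k else 0)"
proof -
  let ?f = "\<lambda>i. if i \<in> Pcls S s c j k then x i j / d j k else 0"
  have nn: "\<And>i. 0 \<le> ?f i"
    using assms xP_nonneg by (auto intro!: divide_nonneg_pos)
  have "(\<integral>\<^sup>+i. ennreal (?f i) \<partial>count_space UNIV) = (\<Sum>i\<in>Pcls S s c j k. ennreal (?f i))"
    by (rule nn_integral_count_space') (auto simp: finite_Pcls)
  also have "\<dots> = ennreal (\<Sum>i\<in>Pcls S s c j k. ?f i)"
    using nn by (intro sum_ennreal) blast
  also have "(\<Sum>i\<in>Pcls S s c j k. ?f i) = (\<Sum>i\<in>Pcls S s c j k. x i j) / d j k"
    by (simp add: sum_divide_distrib)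
  also have "\<dots> = 1" using assms(2) by (simp add: dcls_def)
  finally have I: "(\<integral>\<^sup>+i. ennreal (?f i) \<partial>count_space UNIV) = 1" by simp
  show ?thesis unfolding slot_pmf_def prod.case
    by (rule pmf_embed_pmf[of ?f, OF nn I])
qed

end

context sa2 begin

lemma Q_unique: assumes "j \<in> V" "i \<in> Pcls S s c j (Q q1)" "i \<in> Pcls S s c j (Q q2)"
  shows "q1 = q2"
proof (rule ccontr)
  assume ne: "q1 \<noteq> q2"
  have "c j > 0" using cpos assms(1) by blast
  then have cb: "0 \<le> c j * beta_c" by (simp add: beta_c_def)
  have *: False if "a < b" "i \<in> Pcls S s c j (Q a)" "i \<in> Pcls S s c j (Q b)" for a b
  proof -
    have "gamma_c ^ (b - 1) \<le> gamma_c ^ a"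
      using that(1) by (intro power_decreasing) (auto simp: gamma_c_def)
    then have "gamma_c ^ (b - 1) * (c j * beta_c) \<le> gamma_c ^ a * (c j * beta_c)"
      using cb by (rule mult_right_mono)
    then show False using that(2,3) by (auto simp: mult.assoc)
  qed
  show False using ne * assms by (cases "q1 < q2") (auto simp: not_less_iff_gr_or_eq)
qed

lemma finite_Qs: assumes "j \<in> V" shows "finite {q. Pcls S s c j (Q q) \<noteq> {}}"
proof -
  have "{q. Pcls S s c j (Q q) \<noteq> {}} = (\<Union>i\<in>S. {q. i \<in> Pcls S s c j (Q q)})"
    using Pcls_sub by blast
  moreover have "finite {q. i \<in> Pcls S s c j (Q q)}" for i
  proof (cases "\<exists>q. i \<in> Pcls S s c j (Q q)")
    case True
    then obtain q0 where "i \<in> Pcls S s c j (Q q0)" by blast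
    then have "{q. i \<in> Pcls S s c j (Q q)} \<subseteq> {q0}" using Q_unique[OF assms] by blast
    then show ?thesis using finite_subset by blast
  next
    case False
    then have "{q. i \<in> Pcls S s c j (Q q)} = {}" by blast
    then show ?thesis by (simp only: finite.emptyI)
  qed
  ultimately show ?thesis using finS by (simp del: Pcls.simps)
qed

lemma nslots_pos: assumes "0 < nslots S s c x j q" shows "Pcls S s c j (Q q) \<noteq> {}"
proof
  assume "Pcls S s c j (Q q) = {}"
  then have "d j (Q q) = 0" unfolding dcls_def by (simp only: sum.empty)
  then show False using assms by (simp add: nslots_def)
qed

lemma finite_slots: "finite V \<Longrightarrow> finite (slots S V s c x \<zeta>)"
proof -
  assume fV: "finite V"
  let ?A3 = "(\<Union>j\<in>V. \<Union>q\<in>{q. Pcls S s c j (Q q) \<noteq> {}}. (\<lambda>k. (j, Q q, k)) ` {..<nslots S s c x j q})"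
  have "slots S V s c x \<zeta> \<subseteq> (\<lambda>j. (j,Plus,0)) ` V \<union> (\<lambda>(j,k). (j,Minus,k)) ` (V \<times> {..<2::nat}) \<union> ?A3"
  proof
    fix \<sigma> assume "\<sigma> \<in> slots S V s c x \<zeta>"
    then consider (a) j where "\<sigma> = (j,Plus,0)" "j \<in> V" | (b) j k where "\<sigma> = (j,Minus,k)" "j \<in> V" "k < 2"
      | (q) j q k where "\<sigma> = (j,Q q,k)" "j \<in> V" "k < nslots S s c x j q"
      unfolding slots_def by blast
    then show "\<sigma> \<in> (\<lambda>j. (j,Plus,0)) ` V \<union> (\<lambda>(j,k). (j,Minus,k)) ` (V \<times> {..<2::nat}) \<union> ?A3"
    proof cases
      case a then show ?thesis by blast
    next
      case b then show ?thesis by force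
    next
      case q
      then have "Pcls S s c j (Q q) \<noteq> {}" using nslots_pos by (intro nslots_pos) simp
      then show ?thesis using q by blast
    qed
  qed
  moreover have "finite ?A3" using fV finite_Qs by auto
  moreover have "finite ((\<lambda>j. (j,Plus,0)) ` V \<union> (\<lambda>(j,k). (j,Minus,k)) ` (V \<times> {..<2::nat}))" using fV by simp
  ultimately show ?thesis by (meson finite_Un finite_subset)
qed

lemma inner:
  assumes fV: "finite V" and B: "B \<subseteq> slots S V s c x \<zeta>" "\<forall>\<sigma>\<in>B. fst \<sigma> = j"
  shows "1 - (\<Prod>\<sigma>\<in>B. 1 - pmf (slot_pmf S s c x \<sigma>) i)
    \<le> measure_pmf.prob (Pi_pmf (slots S V s c x \<zeta>) dflt (slot_pmf S s c x)) {\<tau>. j \<in> Xset (slots S V s c x \<zeta>) \<tau> i}"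
proof -
  have "1 - (\<Prod>\<sigma>\<in>B. 1 - pmf (slot_pmf S s c x \<sigma>) i)
     = measure_pmf.prob (Pi_pmf (slots S V s c x \<zeta>) dflt (slot_pmf S s c x)) {\<tau>. \<exists>\<sigma>\<in>B. \<tau> \<sigma> = i}"
    by (rule prob_Pi_exists[symmetric]) (use finite_slots[OF fV] B in auto)
  also have "\<dots> \<le> measure_pmf.prob (Pi_pmf (slots S V s c x \<zeta>) dflt (slot_pmf S s c x)) {\<tau>. j \<in> Xset (slots S V s c x \<zeta>) \<tau> i}"
    using B by (intro measure_pmf.finite_measure_mono) (auto simp: Xset_def)
  finally show ?thesis .
qed

end

lemma alg_minus:
  fixes d t :: real
  assumes "0 < d" "0 \<le> t" "t \<le> d" "t \<le> 1"
  shows "1 - exp (- t) \<le> (if d < 2 then d else d / 2) * (1 - (1 - t / d)^2)"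
proof (cases "d < 2")
  case True
  have "(if d < 2 then d else d / 2) * (1 - (1 - t / d)^2) = 2 * t - t^2 / d"
    using True assms(1) by (simp add: power2_eq_square field_simps)
  also have "t^2 / d \<le> t" using assms by (simp add: power2_eq_square field_simps mult_right_mono)
  then have "t \<le> 2 * t - t^2 / d" by linarith
  finally show ?thesis using exp_b1[of t] by linarith
next
  case False
  have "(if d < 2 then d else d / 2) * (1 - (1 - t / d)^2) = t - t^2 / (2 * d)"
    using False assms(1) by (simp add: power2_eq_square field_simps)
  moreover have "t^2 / (2 * d) \<le> t^2 / 4"
    using False by (intro divide_left_mono) auto
  moreover have "1 - exp (- t) \<le> t - t^2/4" using assms by (intro exp_b2) auto
  ultimately show ?thesis by linarith
qed

lemma alg_Q:
  fixes d t A P3 :: real and n :: nat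
  assumes "0 < d" "0 \<le> t" "t \<le> d" "0 < A" "(1/4) / A * d \<le> real n"
    "1/4 \<le> P3" "A \<le> P3"
  shows "1/4 * (1 - exp (- t)) \<le> P3 * (1 - (1 - t / d)^n)"
proof -
  let ?v = "(1/4) / A"
  have p: "0 \<le> 1 - t/d" "1 - t/d \<le> exp (- (t/d))"
    using assms exp_ge_add_one_self[of "-(t/d)"] by (auto simp: field_simps)
  have "(1 - t/d)^n \<le> exp (- (t/d))^n" using p by (intro power_mono)
  also have "\<dots> = exp (real n * (- (t/d)))" by (rule exp_of_nat_mult[symmetric])
  also have "\<dots> \<le> exp (?v * d * (- (t/d)))"
    using assms by (intro exp_mono mult_right_mono_neg) auto
  also have "?v * d * (- (t/d)) = - (?v * t)" using assms(1) by simp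
  finally have b: "1 - exp (- (?v * t)) \<le> 1 - (1 - t/d)^n" by linarith
  have "1/4 * (1 - exp (- t)) \<le> P3 * (1 - exp (- (?v * t)))"
  proof (cases "?v \<ge> 1")
    case True
    have "exp (- (?v * t)) \<le> exp (- t)"
      using True assms(2) by (simp add: mult_right_mono[of 1 ?v t, simplified])
    moreover have "0 \<le> 1 - exp (- t)" using assms(2) by simp
    ultimately show ?thesis using assms(6) by (intro mult_mono) auto
  next
    case False
    have v0: "0 \<le> ?v" using assms(4) by simp
    have "?v * (1 - exp (- t)) \<le> 1 - exp (- (?v * t))"
      using False v0 by (intro exp_b3) auto
    moreover have "1/4 \<le> P3 * ?v" using assms(4,7) by (simp add: field_simps)
    moreover have "0 \<le> 1 - exp (- t)" using assms(2) by simp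
    ultimately have "1/4 * (1 - exp (- t)) \<le> P3 * ?v * (1 - exp (- t))"
      by (intro mult_right_mono) auto
    also have "\<dots> = P3 * (?v * (1 - exp (- t)))" by (simp only: mult.assoc)
    also have "\<dots> \<le> P3 * (1 - exp (- (?v * t)))"
      using \<open>?v * (1 - exp (- t)) \<le> _\<close> assms(6) by (intro mult_left_mono) auto
    finally show ?thesis .
  qed
  also have "\<dots> \<le> P3 * (1 - (1 - t / d)^n)" using b assms(6) by (intro mult_left_mono) auto
  finally show ?thesis .
qed


context sa2 begin

lemma via_B:
  assumes fV: "finite V" and j: "j \<in> V" and K0: "0 \<le> K"
    and Bsub: "\<And>\<zeta>. \<zeta> j = t \<Longrightarrow> B \<subseteq> slots S V s c x \<zeta>" and Bf: "\<forall>\<sigma>\<in>B. fst \<sigma> = j"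
    and K: "K \<le> 1 - (\<Prod>\<sigma>\<in>B. 1 - pmf (slot_pmf S s c x \<sigma>) i)"
  shows "pmf (zeta_pmf S s c x j) t * K \<le> measure_pmf.prob (sa2_experiment S V s c x dflt)
           {(\<zeta>, \<tau>). j \<in> Xset (slots S V s c x \<zeta>) \<tau> i}"
  unfolding sa2_experiment_def
proof (rule outer_bound[OF fV j K0])
  fix \<zeta> :: "'v \<Rightarrow> nat" assume "\<zeta> j = t"
  show "K \<le> measure_pmf.prob (Pi_pmf (slots S V s c x \<zeta>) dflt (slot_pmf S s c x))
             {\<tau>. j \<in> Xset (slots S V s c x \<zeta>) \<tau> i}"
    using K inner[OF fV Bsub[of \<zeta>, OF \<open>\<zeta> j = t\<close>] Bf, of i dflt] by linarith
qed

lemma classes: assumes "i \<in> S" "j \<in> V" "0 < x i j"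
  shows "i \<in> Pcls S s c j Plus \<or> i \<in> Pcls S s c j Minus \<or> (\<exists>q\<ge>1. i \<in> Pcls S s c j (Q q))"
proof -
  have c: "c j > 0" using cpos assms by blast
  have si: "s i > 0" using spos assms by blast
  have le: "s i \<le> c j" using xb assms by force
  show ?thesis
  proof (cases "s i > c j / 4")
    case True then show ?thesis using le assms(1) by auto
  next
    case False
    let ?P = "\<lambda>q. gamma_c ^ q * c j * beta_c < s i"
    have "0 < s i / (c j * beta_c)" using si c by (simp add: beta_c_def)
    then obtain n where "(1/2)^n < s i / (c j * beta_c)"
      using real_arch_pow_inv[of "s i / (c j * beta_c)" "1/2"] by auto
    then have "?P n" using c by (simp add: gamma_c_def beta_c_def field_simps)
    define q where "q = (LEAST q. ?P q)"
    have Pq: "?P q" unfolding q_def by (rule LeastI) fact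
    have q0: "q \<noteq> 0"
    proof
      assume "q = 0" with Pq False show False by (simp add: beta_c_def)
    qed
    have "\<not> ?P (q - 1)" unfolding q_def by (rule not_less_Least) (use q0 q_def in auto)
    then have "i \<in> Pcls S s c j (Q q)" using Pq assms(1) by auto
    then show ?thesis using q0 by (intro disjI2) (auto intro!: exI[of _ q])
  qed
qed

lemma case_plus:
  assumes fV: "finite V" and j: "j \<in> V" and i: "i \<in> Pcls S s c j Plus" and x0: "0 < x i j"
  shows "delta_c * (1 - exp (- x i j)) \<le> measure_pmf.prob (sa2_experiment S V s c x dflt)
           {(\<zeta>, \<tau>). j \<in> Xset (slots S V s c x \<zeta>) \<tau> i}"
proof -
  have d: "0 < d j Plus" using x_le_d[OF j i] x0 by linarith
  have "pmf (zeta_pmf S s c x j) 1 * (x i j / d j Plus) \<le> measure_pmf.prob (sa2_experiment S V s c x dflt)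
           {(\<zeta>, \<tau>). j \<in> Xset (slots S V s c x \<zeta>) \<tau> i}"
  proof (rule via_B[OF fV j, where B = "{(j, Plus, 0)}"])
    show "0 \<le> x i j / d j Plus" using x0 d by simp
    show "{(j, Plus, 0)} \<subseteq> slots S V s c x \<zeta>" if "\<zeta> j = 1" for \<zeta>
      using that j by (auto simp: slots_def)
    show "x i j / d j Plus \<le> 1 - (\<Prod>\<sigma>\<in>{(j, Plus, 0)}. 1 - pmf (slot_pmf S s c x \<sigma>) i)"
      using pmf_slot[OF j d, of 0 i] i by simp
  qed simp
  also have "pmf (zeta_pmf S s c x j) 1 * (x i j / d j Plus) = delta_c * x i j"
    using pmf_zeta[OF j, of 1] d by simp
  finally show ?thesis using exp_b1[of "x i j"] by (simp add: delta_c_def)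
qed

lemma case_minus:
  assumes fV: "finite V" and j: "j \<in> V" and i: "i \<in> Pcls S s c j Minus" and x0: "0 < x i j"
  shows "delta_c * (1 - exp (- x i j)) \<le> measure_pmf.prob (sa2_experiment S V s c x dflt)
           {(\<zeta>, \<tau>). j \<in> Xset (slots S V s c x \<zeta>) \<tau> i}"
proof -
  have xd: "x i j \<le> d j Minus" using x_le_d[OF j i] .
  have d: "0 < d j Minus" using xd x0 by linarith
  have x1: "x i j \<le> 1" using xb i j Pcls_sub by blast
  let ?K = "1 - (1 - x i j / d j Minus)^2"
  have K0: "0 \<le> ?K" using xd d x0
    by (simp add: power2_eq_square field_simps)
  have "pmf (zeta_pmf S s c x j) 2 * ?K \<le> measure_pmf.prob (sa2_experiment S V s c x dflt)
           {(\<zeta>, \<tau>). j \<in> Xset (slots S V s c x \<zeta>) \<tau> i}"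
  proof (rule via_B[OF fV j K0, where B = "{(j, Minus, 0), (j, Minus, 1)}"])
    show "{(j, Minus, 0), (j, Minus, 1)} \<subseteq> slots S V s c x \<zeta>" if "\<zeta> j = 2" for \<zeta>
      using that j by (auto simp: slots_def)
    show "?K \<le> 1 - (\<Prod>\<sigma>\<in>{(j, Minus, 0), (j, Minus, 1)}. 1 - pmf (slot_pmf S s c x \<sigma>) i)"
      using pmf_slot[OF j d, of 0 i] pmf_slot[OF j d, of 1 i] i by (simp add: power2_eq_square)
  qed simp
  also have "pmf (zeta_pmf S s c x j) 2 * ?K = delta_c * ((if d j Minus < 2 then d j Minus else d j Minus / 2) * ?K)"
    using pmf_zeta[OF j, of 2] by (simp add: hnode_def Let_def)
  finally show ?thesis
    using alg_minus[OF d less_imp_le[OF x0] xd x1] by (simp add: delta_c_def)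
qed

lemma case_Q:
  assumes fV: "finite V" and j: "j \<in> V" and i: "i \<in> Pcls S s c j (Q q)" and q1: "1 \<le> q" and x0: "0 < x i j"
  shows "delta_c * (1 - exp (- x i j)) \<le> measure_pmf.prob (sa2_experiment S V s c x dflt)
           {(\<zeta>, \<tau>). j \<in> Xset (slots S V s c x \<zeta>) \<tau> i}"
proof -
  have xd: "x i j \<le> d j (Q q)" using x_le_d[OF j i] .
  have d: "0 < d j (Q q)" using xd x0 by linarith
  have c: "c j > 0" using cpos j by blast
  have iS: "i \<in> S" using i Pcls_sub by blast
  have si: "s i > 0" using spos iS by blast
  let ?n = "nslots S s c x j q"
  let ?K = "1 - (1 - x i j / d j (Q q))^?n"
  have p01: "0 \<le> 1 - x i j / d j (Q q)" "1 - x i j / d j (Q q) \<le> 1" using xd d x0 by auto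
  have K0: "0 \<le> ?K" using p01 by (simp add: power_le_one)
  have "pmf (zeta_pmf S s c x j) 3 * ?K \<le> measure_pmf.prob (sa2_experiment S V s c x dflt)
           {(\<zeta>, \<tau>). j \<in> Xset (slots S V s c x \<zeta>) \<tau> i}"
  proof (rule via_B[OF fV j K0, where B = "(\<lambda>k. (j, Q q, k)) ` {..<?n}"])
    show "(\<lambda>k. (j, Q q, k)) ` {..<?n} \<subseteq> slots S V s c x \<zeta>" if "\<zeta> j = 3" for \<zeta>
      using that j q1 by (auto simp: slots_def)
    have "(\<Prod>\<sigma>\<in>(\<lambda>k. (j, Q q, k)) ` {..<?n}. 1 - pmf (slot_pmf S s c x \<sigma>) i)
        = (\<Prod>k\<in>{..<?n}. 1 - pmf (slot_pmf S s c x (j, Q q, k)) i)"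
      by (subst prod.reindex) (auto simp: inj_on_def)
    also have "\<dots> = (1 - x i j / d j (Q q))^?n"
      using pmf_slot[OF j d, of _ i] i by simp
    finally show "?K \<le> 1 - (\<Prod>\<sigma>\<in>(\<lambda>k. (j, Q q, k)) ` {..<?n}. 1 - pmf (slot_pmf S s c x \<sigma>) i)"
      by simp
  qed auto
  also have "pmf (zeta_pmf S s c x j) 3 = 1 - delta_c * d j Plus - delta_c * hnode S s c x j"
    using pmf_zeta[OF j, of 3] by simp
  finally have main: "(1 - delta_c * d j Plus - delta_c * hnode S s c x j) * ?K \<le> measure_pmf.prob (sa2_experiment S V s c x dflt)
           {(\<zeta>, \<tau>). j \<in> Xset (slots S V s c x \<zeta>) \<tau> i}" .
  define A where "A = small j / c j"
  have "gamma_c ^ (q - 1) \<le> 1" by (simp add: gamma_c_def power_le_one)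
  then have "gamma_c ^ (q - 1) * (c j * beta_c) \<le> 1 * (c j * beta_c)"
    using c by (intro mult_right_mono) (auto simp: beta_c_def)
  then have ismall: "i \<in> {i\<in>S. s i \<le> c j * beta_c}" using i iS by (auto simp: mult.assoc)
  have "s i * x i j \<le> small j"
    using ismall finS sx_nonneg[OF j] by (intro member_le_sum) auto
  moreover have "0 < s i * x i j" using si x0 by simp
  ultimately have sm: "0 < small j" by linarith
  then have A0: "0 < A" using c by (simp add: A_def)
  have vn: "vnode S s c x j = (1/4) / A" using c by (simp add: vnode_def A_def delta_c_def)
  have nle: "(1/4) / A * d j (Q q) \<le> real ?n"
    unfolding nslots_def vn by linarith
  have h: "0 \<le> hnode S s c x j" "hnode S s c x j \<le> d j Minus" "d j Plus + hnode S s c x j \<le> 3"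
    using h_props[OF j] by auto
  have cap: "c j * d j Plus / 2 + c j * d j Minus / 4 + small j \<le> c j" using capacity[OF j] .
  then have "c j * (d j Plus / 2 + d j Minus / 4 + A) \<le> c j * 1"
    using c by (simp add: A_def algebra_simps)
  then have cap': "d j Plus / 2 + d j Minus / 4 + A \<le> 1" using c by simp
  have P1: "1/4 \<le> 1 - delta_c * d j Plus - delta_c * hnode S s c x j"
    using h by (simp add: delta_c_def)
  have P2: "A \<le> 1 - delta_c * d j Plus - delta_c * hnode S s c x j"
    using h cap' d_nonneg[OF j, of Plus] by (simp add: delta_c_def)
  have "1/4 * (1 - exp (- x i j)) \<le> (1 - delta_c * d j Plus - delta_c * hnode S s c x j) * ?K"
    by (rule alg_Q[OF d less_imp_le[OF x0] xd A0 nle P1 P2])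
  then show ?thesis using main by (simp add: delta_c_def)
qed

end
theorem theorem17:
  fixes S :: "'s set" and V :: "'v set" and U :: "'u set"
    and s :: "'s \<Rightarrow> real" and c :: "'v \<Rightarrow> real"
    and svc :: "'u \<Rightarrow> 's" and T :: "'u \<Rightarrow> 'v set" and w :: "'u \<Rightarrow> real"
    and x :: "'s \<Rightarrow> 'v \<Rightarrow> real" and y :: "'u \<Rightarrow> real" and dflt :: 's
  assumes "finite S" and "finite V" and "finite U"
    and "\<forall>i\<in>S. s i > 0" and "\<forall>j\<in>V. c j > 0"
    and "\<forall>k\<in>U. svc k \<in> S \<and> T k \<subseteq> V \<and> w k > 0"
    and "lp_optimal S V U s c svc T w x y"
  shows "\<forall>i\<in>S. \<forall>j\<in>V.
    measure_pmf.prob (sa2_experiment S V s c x dflt)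
        {(\<zeta>, \<tau>). j \<in> Xset (slots S V s c x \<zeta>) \<tau> i}
      \<ge> delta_c * (1 - exp (- x i j))"
proof (intro ballI)
  fix i j assume iS: "i \<in> S" and jV: "j \<in> V"
  interpret sa2 S V s c x
    using assms by unfold_locales (auto simp: lp_optimal_def lp_feasible_def)
  have x0: "0 \<le> x i j" using xb iS jV by blast
  show "measure_pmf.prob (sa2_experiment S V s c x dflt)
        {(\<zeta>, \<tau>). j \<in> Xset (slots S V s c x \<zeta>) \<tau> i} \<ge> delta_c * (1 - exp (- x i j))"
  proof (cases "x i j = 0")
    case True then show ?thesis by simp
  next
    case False
    then have xp: "0 < x i j" using x0 by linarith
    from classes[OF iS jV xp] show ?thesis
      using case_plus[OF assms(2) jV _ xp] case_minus[OF assms(2) jV _ xp] case_Q[OF assms(2) jV _ _ xp]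
      by blast
  qed
qed

end
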